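(* Let $\mathsf{X}$ be a small category and let $T:\mathbb{R}_{\ge 0}\to\mathsf{End}(\mathsf{X})$ be a strict monoidal functor, where $\mathbb{R}_{\ge0}$ is the poset category of nonnegative reals (a unique morphism $s\to t$ iff $s\le t$) with monoidal structure given by addition. Let $\mathrm{W}(t)=t$. Then for all $X,Y\in\mathsf{X}_0$, the flow interleaving distance $d^{\mathrm{Fl}}_T(X,Y)$ equals the $\mathbb{R}_{\ge0}$-interleaving distance $d_{T,\mathrm{W}}(X,Y)$.
   Context: $\mathsf{End}(\mathsf{X})$ is the strict monoidal category of endofunctors of $\mathsf{X}$ and natural transformations (tensor = composition / horizontal composition). Write $T_t=T(t)$ and $T(s\le t):T_s\Rightarrow T_t$ for the image of the morphism $s\le t$; strictness means $T_0=1_{\mathsf X}$, $T_{s+t}=T_sT_t$, and $T$ takes sums of morphisms to horizontal composites. A $t$-flow interleaving of $X,Y$ is a pair of morphisms $\phi:X\to T_t(Y)$, $\psi:Y\to T_t(X)$ with $T_t(\psi)\circ\phi=T(0\le 2t)_X$ and $T_t(\phi)\circ\psi=T(0\le 2t)_Y$; $d^{\mathrm{Fl}}_T(X,Y)=\inf\{t\ge0:\text{a } t\text{-flow interleaving exists}\}$. For $s,t\ge0$, $X$ and $Y$ are $(s,t)$-interleaved if there exist $\phi:X\to T_s(Y)$, $\psi:Y\to T_t(X)$ with $T_s(\psi)\circ\phi=T(0\le s+t)_X$ and $T_t(\phi)\circ\psi=T(0\le t+s)_Y$; then $d_{T,\mathrm{W}}(X,Y)=\inf\{\max\{s,t\}: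 X,Y\ (s,t)\text{-interleaved}\}$. Both infima of the empty set are $\infty$. *)

theory Defs
  imports Complex_Main "HOL-Library.Extended_Real"
begin

definition category ::
  "'o set \<Rightarrow> ('o \<Rightarrow> 'o \<Rightarrow> 'm set) \<Rightarrow> ('m \<Rightarrow> 'm \<Rightarrow> 'm) \<Rightarrow> ('o \<Rightarrow> 'm) \<Rightarrow> bool" where
  "category Ob Hom cmp idm \<longleftrightarrow>
     (\<forall>a b. Hom a b \<noteq> {} \<longrightarrow> a \<in> Ob \<and> b \<in> Ob) \<and>
     (\<forall>a b a' b' f. f \<in> Hom a b \<longrightarrow> f \<in> Hom a' b' \<longrightarrow> a = a' \<and> b = b') \<and>
     (\<forall>a\<in>Ob. idm a \<in> Hom a a) \<and>
     (\<forall>a b c f g. f \<in> Hom a b \<longrightarrow> g \<in> Hom b c \<longrightarrow> cmp g f \<in> Hom a c) \<and>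
     (\<forall>a b c d f g h. f \<in> Hom a b \<longrightarrow> g \<in> Hom b c \<longrightarrow> h \<in> Hom c d \<longrightarrow>
         cmp h (cmp g f) = cmp (cmp h g) f) \<and>
     (\<forall>a b f. f \<in> Hom a b \<longrightarrow> cmp (idm b) f = f \<and> cmp f (idm a) = f)"

definition endofunctor ::
  "'o set \<Rightarrow> ('o \<Rightarrow> 'o \<Rightarrow> 'm set) \<Rightarrow> ('m \<Rightarrow> 'm \<Rightarrow> 'm) \<Rightarrow> ('o \<Rightarrow> 'm) \<Rightarrow>
   ('o \<Rightarrow> 'o) \<Rightarrow> ('m \<Rightarrow> 'm) \<Rightarrow> bool" where
  "endofunctor Ob Hom cmp idm F Fm \<longleftrightarrow>
     (\<forall>a\<in>Ob. F a \<in> Ob) \<and>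
     (\<forall>a b f. f \<in> Hom a b \<longrightarrow> Fm f \<in> Hom (F a) (F b)) \<and>
     (\<forall>a\<in>Ob. Fm (idm a) = idm (F a)) \<and>
     (\<forall>a b c f g. f \<in> Hom a b \<longrightarrow> g \<in> Hom b c \<longrightarrow> Fm (cmp g f) = cmp (Fm g) (Fm f))"

definition nat_trans ::
  "'o set \<Rightarrow> ('o \<Rightarrow> 'o \<Rightarrow> 'm set) \<Rightarrow> ('m \<Rightarrow> 'm \<Rightarrow> 'm) \<Rightarrow>
   ('o \<Rightarrow> 'o) \<Rightarrow> ('m \<Rightarrow> 'm) \<Rightarrow> ('o \<Rightarrow> 'o) \<Rightarrow> ('m \<Rightarrow> 'm) \<Rightarrow> ('o \<Rightarrow> 'm) \<Rightarrow> bool" where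
  "nat_trans Ob Hom cmp F Fm G Gm eta \<longleftrightarrow>
     (\<forall>a\<in>Ob. eta a \<in> Hom (F a) (G a)) \<and>
     (\<forall>a b f. f \<in> Hom a b \<longrightarrow> cmp (Gm f) (eta a) = cmp (eta b) (Fm f))"

text \<open>A strict monoidal functor T from the poset ([0,\<infinity>), \<le>, +) to End(X):
  TO t / TM t are the object/morphism maps of T_t, and TN s t is T(s \<le> t).
  Tensor in End(X) is composition, T_s \<otimes> T_t = T_s \<circ> T_t; horizontal composite of
  alpha : F \<Rightarrow> F' and beta : G \<Rightarrow> G' has components alpha_{G' a} \<circ> F(beta_a).\<close>
definition strict_monoidal_flow ::
  "'o set \<Rightarrow> ('o \<Rightarrow> 'o \<Rightarrow> 'm set) \<Rightarrow> ('m \<Rightarrow> 'm \<Rightarrow> 'm) \<Rightarrow> ('o \<Rightarrow> 'm) \<Rightarrow>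
   (real \<Rightarrow> 'o \<Rightarrow> 'o) \<Rightarrow> (real \<Rightarrow> 'm \<Rightarrow> 'm) \<Rightarrow> (real \<Rightarrow> real \<Rightarrow> 'o \<Rightarrow> 'm) \<Rightarrow> bool" where
  "strict_monoidal_flow Ob Hom cmp idm TO TM TN \<longleftrightarrow>
     (\<forall>t. 0 \<le> t \<longrightarrow> endofunctor Ob Hom cmp idm (TO t) (TM t)) \<and>
     (\<forall>s t. 0 \<le> s \<longrightarrow> s \<le> t \<longrightarrow> nat_trans Ob Hom cmp (TO s) (TM s) (TO t) (TM t) (TN s t)) \<and>
     (\<forall>t. 0 \<le> t \<longrightarrow> (\<forall>a\<in>Ob. TN t t a = idm (TO t a))) \<and>
     (\<forall>s t u. 0 \<le> s \<longrightarrow> s \<le> t \<longrightarrow> t \<le> u \<longrightarrow>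
         (\<forall>a\<in>Ob. TN s u a = cmp (TN t u a) (TN s t a))) \<and>
     (\<forall>a\<in>Ob. TO 0 a = a) \<and>
     (\<forall>a b f. f \<in> Hom a b \<longrightarrow> TM 0 f = f) \<and>
     (\<forall>s t. 0 \<le> s \<longrightarrow> 0 \<le> t \<longrightarrow>
         (\<forall>a\<in>Ob. TO (s + t) a = TO s (TO t a)) \<and>
         (\<forall>a b f. f \<in> Hom a b \<longrightarrow> TM (s + t) f = TM s (TM t f))) \<and>
     (\<forall>s s' t t'. 0 \<le> s \<longrightarrow> s \<le> s' \<longrightarrow> 0 \<le> t \<longrightarrow> t \<le> t' \<longrightarrow>
         (\<forall>a\<in>Ob. TN (s + t) (s' + t') a = cmp (TN s s' (TO t' a)) (TM s (TN t t' a))))"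

definition interleaved ::
  "('o \<Rightarrow> 'o \<Rightarrow> 'm set) \<Rightarrow> ('m \<Rightarrow> 'm \<Rightarrow> 'm) \<Rightarrow>
   (real \<Rightarrow> 'o \<Rightarrow> 'o) \<Rightarrow> (real \<Rightarrow> 'm \<Rightarrow> 'm) \<Rightarrow> (real \<Rightarrow> real \<Rightarrow> 'o \<Rightarrow> 'm) \<Rightarrow>
   real \<Rightarrow> real \<Rightarrow> 'o \<Rightarrow> 'o \<Rightarrow> bool" where
  "interleaved Hom cmp TO TM TN s t X Y \<longleftrightarrow>
     (\<exists>phi psi. phi \<in> Hom X (TO s Y) \<and> psi \<in> Hom Y (TO t X) \<and>
        cmp (TM s psi) phi = TN 0 (s + t) X \<and>
        cmp (TM t phi) psi = TN 0 (t + s) Y)"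

definition flow_interleaved ::
  "('o \<Rightarrow> 'o \<Rightarrow> 'm set) \<Rightarrow> ('m \<Rightarrow> 'm \<Rightarrow> 'm) \<Rightarrow>
   (real \<Rightarrow> 'o \<Rightarrow> 'o) \<Rightarrow> (real \<Rightarrow> 'm \<Rightarrow> 'm) \<Rightarrow> (real \<Rightarrow> real \<Rightarrow> 'o \<Rightarrow> 'm) \<Rightarrow>
   real \<Rightarrow> 'o \<Rightarrow> 'o \<Rightarrow> bool" where
  "flow_interleaved Hom cmp TO TM TN t X Y \<longleftrightarrow>
     (\<exists>phi psi. phi \<in> Hom X (TO t Y) \<and> psi \<in> Hom Y (TO t X) \<and>
        cmp (TM t psi) phi = TN 0 (2 * t) X \<and>
        cmp (TM t phi) psi = TN 0 (2 * t) Y)"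

definition flow_dist ::
  "('o \<Rightarrow> 'o \<Rightarrow> 'm set) \<Rightarrow> ('m \<Rightarrow> 'm \<Rightarrow> 'm) \<Rightarrow>
   (real \<Rightarrow> 'o \<Rightarrow> 'o) \<Rightarrow> (real \<Rightarrow> 'm \<Rightarrow> 'm) \<Rightarrow> (real \<Rightarrow> real \<Rightarrow> 'o \<Rightarrow> 'm) \<Rightarrow>
   'o \<Rightarrow> 'o \<Rightarrow> ereal" where
  "flow_dist Hom cmp TO TM TN X Y =
     Inf (ereal ` {t. 0 \<le> t \<and> flow_interleaved Hom cmp TO TM TN t X Y})"

definition W_dist ::
  "('o \<Rightarrow> 'o \<Rightarrow> 'm set) \<Rightarrow> ('m \<Rightarrow> 'm \<Rightarrow> 'm) \<Rightarrow>
   (real \<Rightarrow> 'o \<Rightarrow> 'o) \<Rightarrow> (real \<Rightarrow> 'm \<Rightarrow> 'm) \<Rightarrow> (real \<Rightarrow> real \<Rightarrow> 'o \<Rightarrow> 'm) \<Rightarrow>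
   'o \<Rightarrow> 'o \<Rightarrow> ereal" where
  "W_dist Hom cmp TO TM TN X Y =
     Inf ((\<lambda>(s, t). ereal (max s t)) `
          {(s, t). 0 \<le> s \<and> 0 \<le> t \<and> interleaved Hom cmp TO TM TN s t X Y})"

end

theory Submission
  imports Defs
begin

lemma interleaved_to_flow:
  assumes C: "category Ob Hom cmp idm"
    and T: "strict_monoidal_flow Ob Hom cmp idm TO TM TN"
    and X: "X \<in> Ob" and Y: "Y \<in> Ob"
    and st: "0 \<le> s" "s \<le> t"
    and I: "interleaved Hom cmp TO TM TN s t X Y"
  shows "flow_interleaved Hom cmp TO TM TN t X Y"
proof -
  have t0: "0 \<le> t" using st by simp
  note Cu = C[unfolded category_def]
  note Tu = T[unfolded strict_monoidal_flow_def]
  have cid: "\<And>a. a \<in> Ob \<Longrightarrow> idm a \<in> Hom a a"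
    using conjunct1[OF conjunct2[OF conjunct2[OF Cu]]] by blast
  have ccmp: "\<And>a b c f g. f \<in> Hom a b \<Longrightarrow> g \<in> Hom b c \<Longrightarrow> cmp g f \<in> Hom a c"
    using conjunct1[OF conjunct2[OF conjunct2[OF conjunct2[OF Cu]]]] by blast
  have cassoc: "\<And>a b c d f g h. f \<in> Hom a b \<Longrightarrow> g \<in> Hom b c \<Longrightarrow> h \<in> Hom c d \<Longrightarrow>
         cmp h (cmp g f) = cmp (cmp h g) f"
    using conjunct1[OF conjunct2[OF conjunct2[OF conjunct2[OF conjunct2[OF Cu]]]]] by blast
  have cunit: "\<And>a b f. f \<in> Hom a b \<Longrightarrow> cmp (idm b) f = f \<and> cmp f (idm a) = f"
    using conjunct2[OF conjunct2[OF conjunct2[OF conjunct2[OF conjunct2[OF Cu]]]]] by blast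
  have ef: "\<And>u. 0 \<le> u \<Longrightarrow> endofunctor Ob Hom cmp idm (TO u) (TM u)"
    using conjunct1[OF Tu] by blast
  have nt: "\<And>u v. 0 \<le> u \<Longrightarrow> u \<le> v \<Longrightarrow> nat_trans Ob Hom cmp (TO u) (TM u) (TO v) (TM v) (TN u v)"
    using conjunct1[OF conjunct2[OF Tu]] by blast
  have nid: "\<And>u a. 0 \<le> u \<Longrightarrow> a \<in> Ob \<Longrightarrow> TN u u a = idm (TO u a)"
    using conjunct1[OF conjunct2[OF conjunct2[OF Tu]]] by blast
  have ncomp: "\<And>u v w a. 0 \<le> u \<Longrightarrow> u \<le> v \<Longrightarrow> v \<le> w \<Longrightarrow> a \<in> Ob \<Longrightarrow> TN u w a = cmp (TN v w a) (TN u v a)"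
    using conjunct1[OF conjunct2[OF conjunct2[OF conjunct2[OF Tu]]]] by blast
  have hor: "\<And>u u' v v' a. 0 \<le> u \<Longrightarrow> u \<le> u' \<Longrightarrow> 0 \<le> v \<Longrightarrow> v \<le> v' \<Longrightarrow> a \<in> Ob \<Longrightarrow> TN (u + v) (u' + v') a = cmp (TN u u' (TO v' a)) (TM u (TN v v' a))"
    using conjunct2[OF conjunct2[OF conjunct2[OF conjunct2[OF conjunct2[OF conjunct2[OF conjunct2[OF Tu]]]]]]] by blast
  have FO: "\<And>u a. 0 \<le> u \<Longrightarrow> a \<in> Ob \<Longrightarrow> TO u a \<in> Ob"
    using ef unfolding endofunctor_def by blast
  have FH: "\<And>u a b f. 0 \<le> u \<Longrightarrow> f \<in> Hom a b \<Longrightarrow> TM u f \<in> Hom (TO u a) (TO u b)"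
    using ef unfolding endofunctor_def by blast
  have Fid: "\<And>u a. 0 \<le> u \<Longrightarrow> a \<in> Ob \<Longrightarrow> TM u (idm a) = idm (TO u a)"
    using ef unfolding endofunctor_def by blast
  have Fc: "\<And>u a b c f g. 0 \<le> u \<Longrightarrow> f \<in> Hom a b \<Longrightarrow> g \<in> Hom b c \<Longrightarrow>
      TM u (cmp g f) = cmp (TM u g) (TM u f)"
    using ef unfolding endofunctor_def by blast
  have NH: "\<And>u v a. 0 \<le> u \<Longrightarrow> u \<le> v \<Longrightarrow> a \<in> Ob \<Longrightarrow> TN u v a \<in> Hom (TO u a) (TO v a)"
    using nt unfolding nat_trans_def by blast
  have Nnat: "\<And>u v a b f. 0 \<le> u \<Longrightarrow> u \<le> v \<Longrightarrow> f \<in> Hom a b \<Longrightarrow>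
      cmp (TM v f) (TN u v a) = cmp (TN u v b) (TM u f)"
    using nt unfolding nat_trans_def by blast
  from I obtain phi psi where phi: "phi \<in> Hom X (TO s Y)" and psi: "psi \<in> Hom Y (TO t X)"
    and e1: "cmp (TM s psi) phi = TN 0 (s + t) X" and e2: "cmp (TM t phi) psi = TN 0 (t + s) Y"
    unfolding interleaved_def by blast
  define N where "N = TN s t Y"
  have NH': "N \<in> Hom (TO s Y) (TO t Y)" using NH st Y N_def by blast
  define phi' where "phi' = cmp N phi"
  have phi': "phi' \<in> Hom X (TO t Y)" using ccmp phi NH' phi'_def by blast
  have TX: "TO t X \<in> Ob" using FO t0 X by blast
  have TY: "TO t Y \<in> Ob" using FO t0 Y by blast
  have Mpsi: "TM s psi \<in> Hom (TO s Y) (TO s (TO t X))" using FH st psi by blast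
  have Npsi: "TM t psi \<in> Hom (TO t Y) (TO t (TO t X))" using FH t0 psi by blast
  have N2: "TN s t (TO t X) \<in> Hom (TO s (TO t X)) (TO t (TO t X))" using NH st TX by blast
  have h1: "TN (s + t) (t + t) X = TN s t (TO t X)"
  proof -
    have "TN (s + t) (t + t) X = cmp (TN s t (TO t X)) (TM s (TN t t X))"
      by (rule hor) (use st X in auto)
    also have "TM s (TN t t X) = idm (TO s (TO t X))" using nid t0 X Fid st TX by simp
    finally show ?thesis using cunit N2 by simp
  qed
  have E1: "cmp (TM t psi) phi' = TN 0 (2 * t) X"
  proof -
    have "cmp (TM t psi) phi' = cmp (cmp (TM t psi) N) phi"
      using cassoc[OF phi NH' Npsi] phi'_def by simp
    also have "cmp (TM t psi) N = cmp (TN s t (TO t X)) (TM s psi)"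
      using Nnat[OF st(1) st(2) psi] N_def by simp
    also have "cmp (cmp (TN s t (TO t X)) (TM s psi)) phi = cmp (TN s t (TO t X)) (cmp (TM s psi) phi)"
      using cassoc[OF phi Mpsi N2] by simp
    also have "\<dots> = cmp (TN (s + t) (t + t) X) (TN 0 (s + t) X)" using e1 h1 by simp
    also have "\<dots> = TN 0 (t + t) X" by (rule ncomp[symmetric]) (use st X in auto)
    finally show ?thesis by (simp only: mult_2)
  qed
  have Mphi: "TM t phi \<in> Hom (TO t X) (TO t (TO s Y))" using FH t0 phi by blast
  have MN: "TM t N \<in> Hom (TO t (TO s Y)) (TO t (TO t Y))" using FH t0 NH' by blast
  have h2: "TN (t + s) (t + t) Y = TM t N"
  proof -
    have "TN (t + s) (t + t) Y = cmp (TN t t (TO t Y)) (TM t (TN s t Y))"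
      by (rule hor) (use st Y in auto)
    also have "TN t t (TO t Y) = idm (TO t (TO t Y))" using nid t0 TY by simp
    finally show ?thesis using cunit MN N_def by simp
  qed
  have E2: "cmp (TM t phi') psi = TN 0 (2 * t) Y"
  proof -
    have "cmp (TM t phi') psi = cmp (cmp (TM t N) (TM t phi)) psi"
      using Fc[OF t0 phi NH'] phi'_def by simp
    also have "\<dots> = cmp (TM t N) (cmp (TM t phi) psi)"
      using cassoc[OF psi Mphi MN] by simp
    also have "\<dots> = cmp (TN (t + s) (t + t) Y) (TN 0 (t + s) Y)" using e2 h2 by simp
    also have "\<dots> = TN 0 (t + t) Y" by (rule ncomp[symmetric]) (use st Y in auto)
    finally show ?thesis by (simp only: mult_2)
  qed
  show ?thesis unfolding flow_interleaved_def using phi' psi E1 E2 by blast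
qed

theorem proposition3p9:
  fixes Ob :: "'o set" and Hom :: "'o \<Rightarrow> 'o \<Rightarrow> 'm set"
    and cmp :: "'m \<Rightarrow> 'm \<Rightarrow> 'm" and idm :: "'o \<Rightarrow> 'm"
    and TO :: "real \<Rightarrow> 'o \<Rightarrow> 'o" and TM :: "real \<Rightarrow> 'm \<Rightarrow> 'm"
    and TN :: "real \<Rightarrow> real \<Rightarrow> 'o \<Rightarrow> 'm"
  assumes "category Ob Hom cmp idm"
    and "strict_monoidal_flow Ob Hom cmp idm TO TM TN"
    and "X \<in> Ob" and "Y \<in> Ob"
  shows "flow_dist Hom cmp TO TM TN X Y = W_dist Hom cmp TO TM TN X Y"
proof -
  have sw: "interleaved Hom cmp TO TM TN t s Y X"
    if "interleaved Hom cmp TO TM TN s t X Y" for s t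
    using that unfolding interleaved_def by (auto simp: add.commute)
  have fsw: "flow_interleaved Hom cmp TO TM TN t X Y"
    if "flow_interleaved Hom cmp TO TM TN t Y X" for t
    using that unfolding flow_interleaved_def by blast
  have key: "flow_interleaved Hom cmp TO TM TN (max s t) X Y"
    if "0 \<le> s" "0 \<le> t" "interleaved Hom cmp TO TM TN s t X Y" for s t
  proof (cases "s \<le> t")
    case True
    then show ?thesis using interleaved_to_flow[OF assms(1,2,3,4) that(1) True that(3)] by simp
  next
    case False
    then have "flow_interleaved Hom cmp TO TM TN s Y X"
      using interleaved_to_flow[OF assms(1,2,4,3) that(2) _ sw[OF that(3)]] by simp
    then show ?thesis using fsw False by simp
  qed
  have bk: "interleaved Hom cmp TO TM TN t t X Y"
    if "flow_interleaved Hom cmp TO TM TN t X Y" for t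
    using that unfolding flow_interleaved_def interleaved_def mult_2 .
  have "ereal ` {t. 0 \<le> t \<and> flow_interleaved Hom cmp TO TM TN t X Y} =
     (\<lambda>(s, t). ereal (max s t)) ` {(s, t). 0 \<le> s \<and> 0 \<le> t \<and> interleaved Hom cmp TO TM TN s t X Y}"
  proof
    show "ereal ` {t. 0 \<le> t \<and> flow_interleaved Hom cmp TO TM TN t X Y} \<subseteq> (\<lambda>(s, t). ereal (max s t)) ` {(s, t). 0 \<le> s \<and> 0 \<le> t \<and> interleaved Hom cmp TO TM TN s t X Y}"
    proof
      fix x assume "x \<in> ereal ` {t. 0 \<le> t \<and> flow_interleaved Hom cmp TO TM TN t X Y}"
      then obtain t where "x = ereal t" "0 \<le> t" "flow_interleaved Hom cmp TO TM TN t X Y" by blast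
      then show "x \<in> (\<lambda>(s, t). ereal (max s t)) ` {(s, t). 0 \<le> s \<and> 0 \<le> t \<and> interleaved Hom cmp TO TM TN s t X Y}"
        using bk by (intro image_eqI[of _ _ "(t,t)"]) auto
    qed
  next
    show "(\<lambda>(s, t). ereal (max s t)) ` {(s, t). 0 \<le> s \<and> 0 \<le> t \<and> interleaved Hom cmp TO TM TN s t X Y}
       \<subseteq> ereal ` {t. 0 \<le> t \<and> flow_interleaved Hom cmp TO TM TN t X Y}"
      using key by (auto simp: max_def)
  qed
  then show ?thesis unfolding flow_dist_def W_dist_def by simp
qed

end
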